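(* Let $k$ be a field, $Q$ a finite connected quiver without oriented cycles with vertex set $Q_0$ and arrow set $Q_1$, let $m\geq 2$, and let $\Lambda=kQ/F^m$ be the $m$-truncated path algebra. Then $$\dim_k H^1(\Lambda,\Lambda)=1-|Q_0|+|Q_1/\!/B|,$$ where $B$ is the set of paths of $Q$ of length strictly less than $m$ (including vertices) and $Q_1/\!/B=\{(a,\varepsilon)\in Q_1\times B\mid s(\varepsilon)=s(a),\ t(\varepsilon)=t(a)\}$.
   Context: $kQ$ is the path algebra of $Q$; $F$ is the two-sided ideal generated by the arrows, so $F^m$ is the ideal generated by all paths of length $m$. $H^1(\Lambda,\Lambda)$ is the first Hochschild cohomology of $\Lambda$ (derivations modulo inner derivations). $s$ and $t$ denote source and target of arrows and paths. *)

theory Defs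
  imports Main "HOL.Vector_Spaces" "HOL-Library.Function_Algebras"
begin

text \<open>A path is a pair (v, as): the starting vertex v together with the list of arrows
  (read left to right).  The trivial path e_v is (v, []).\<close>

type_synonym ('v, 'a) path = "'v \<times> 'a list"

definition is_quiver :: "'v set \<Rightarrow> 'a set \<Rightarrow> ('a \<Rightarrow> 'v) \<Rightarrow> ('a \<Rightarrow> 'v) \<Rightarrow> bool" where
  "is_quiver V A s t \<longleftrightarrow> (\<forall>a\<in>A. s a \<in> V \<and> t a \<in> V)"

definition is_path :: "'v set \<Rightarrow> 'a set \<Rightarrow> ('a \<Rightarrow> 'v) \<Rightarrow> ('a \<Rightarrow> 'v) \<Rightarrow> ('v, 'a) path \<Rightarrow> bool" where
  "is_path V A s t p \<longleftrightarrow> fst p \<in> V \<and> set (snd p) \<subseteq> A \<and>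
     (snd p \<noteq> [] \<longrightarrow> s (hd (snd p)) = fst p) \<and>
     (\<forall>i. Suc i < length (snd p) \<longrightarrow> t (snd p ! i) = s (snd p ! Suc i))"

definition path_src :: "('v, 'a) path \<Rightarrow> 'v" where
  "path_src p = fst p"

definition path_tgt :: "('a \<Rightarrow> 'v) \<Rightarrow> ('v, 'a) path \<Rightarrow> 'v" where
  "path_tgt t p = (if snd p = [] then fst p else t (last (snd p)))"

definition path_len :: "('v, 'a) path \<Rightarrow> nat" where
  "path_len p = length (snd p)"

text \<open>Concatenation p q (first p, then q), meaningful when path_tgt t p = path_src q.\<close>
definition path_cat :: "('v, 'a) path \<Rightarrow> ('v, 'a) path \<Rightarrow> ('v, 'a) path" where
  "path_cat p q = (fst p, snd p @ snd q)"

definition finite_quiver :: "'v set \<Rightarrow> 'a set \<Rightarrow> bool" where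
  "finite_quiver V A \<longleftrightarrow> finite V \<and> finite A"

definition connected_quiver :: "'v set \<Rightarrow> 'a set \<Rightarrow> ('a \<Rightarrow> 'v) \<Rightarrow> ('a \<Rightarrow> 'v) \<Rightarrow> bool" where
  "connected_quiver V A s t \<longleftrightarrow> V \<noteq> {} \<and>
     (\<forall>u\<in>V. \<forall>v\<in>V. (u, v) \<in> ({(s a, t a) | a. a \<in> A} \<union> {(t a, s a) | a. a \<in> A})\<^sup>*)"

definition acyclic_quiver :: "'v set \<Rightarrow> 'a set \<Rightarrow> ('a \<Rightarrow> 'v) \<Rightarrow> ('a \<Rightarrow> 'v) \<Rightarrow> bool" where
  "acyclic_quiver V A s t \<longleftrightarrow>
     \<not> (\<exists>p. is_path V A s t p \<and> path_len p > 0 \<and> path_src p = path_tgt t p)"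

definition short_paths :: "'v set \<Rightarrow> 'a set \<Rightarrow> ('a \<Rightarrow> 'v) \<Rightarrow> ('a \<Rightarrow> 'v) \<Rightarrow> nat \<Rightarrow> ('v, 'a) path set" where
  "short_paths V A s t m = {p. is_path V A s t p \<and> path_len p < m}"

definition parallel_pairs :: "'v set \<Rightarrow> 'a set \<Rightarrow> ('a \<Rightarrow> 'v) \<Rightarrow> ('a \<Rightarrow> 'v) \<Rightarrow> nat \<Rightarrow> ('a \<times> ('v, 'a) path) set" where
  "parallel_pairs V A s t m = {(a, e). a \<in> A \<and> e \<in> short_paths V A s t m \<and>
       path_src e = s a \<and> path_tgt t e = t a}"

text \<open>Since the residue classes of the paths of
  length < m form a k-basis of kQ/F^m (F^m being spanned by the paths of length \<ge> m),
  \<Lambda> is realised as the k-vector space of coefficient functions on paths supported on B,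
  with the product induced by concatenation of paths (zero if not composable or if the
  concatenation has length \<ge> m, i.e. lies in F^m).\<close>
definition trunc_carrier :: "'v set \<Rightarrow> 'a set \<Rightarrow> ('a \<Rightarrow> 'v) \<Rightarrow> ('a \<Rightarrow> 'v) \<Rightarrow> nat \<Rightarrow> (('v, 'a) path \<Rightarrow> 'k::field) set" where
  "trunc_carrier V A s t m = {x. \<forall>p. p \<notin> short_paths V A s t m \<longrightarrow> x p = 0}"

definition trunc_mult :: "'v set \<Rightarrow> 'a set \<Rightarrow> ('a \<Rightarrow> 'v) \<Rightarrow> ('a \<Rightarrow> 'v) \<Rightarrow> nat \<Rightarrow>
    (('v, 'a) path \<Rightarrow> 'k::field) \<Rightarrow> (('v, 'a) path \<Rightarrow> 'k) \<Rightarrow> (('v, 'a) path \<Rightarrow> 'k)" where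
  "trunc_mult V A s t m x y r =
     (if r \<in> short_paths V A s t m then
        (\<Sum>(p, q) \<in> {(p, q). p \<in> short_paths V A s t m \<and> q \<in> short_paths V A s t m \<and>
                             path_tgt t p = path_src q \<and> path_cat p q = r}. x p * y q)
      else 0)"

text \<open>k-linear derivations \<Lambda> \<rightarrow> \<Lambda>.  Maps are normalised to be 0 outside \<Lambda> so that
  each derivation has a unique representative.\<close>
definition derivations :: "'v set \<Rightarrow> 'a set \<Rightarrow> ('a \<Rightarrow> 'v) \<Rightarrow> ('a \<Rightarrow> 'v) \<Rightarrow> nat \<Rightarrow>
    ((('v, 'a) path \<Rightarrow> 'k::field) \<Rightarrow> (('v, 'a) path \<Rightarrow> 'k)) set" where
  "derivations V A s t m = (let L = trunc_carrier V A s t m; mu = trunc_mult V A s t m in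
     {D. (\<forall>x. x \<notin> L \<longrightarrow> D x = 0) \<and> (\<forall>x\<in>L. D x \<in> L) \<and>
         (\<forall>x\<in>L. \<forall>y\<in>L. D (x + y) = D x + D y) \<and>
         (\<forall>c. \<forall>x\<in>L. D (\<lambda>p. c * x p) = (\<lambda>p. c * D x p)) \<and>
         (\<forall>x\<in>L. \<forall>y\<in>L. D (mu x y) = mu (D x) y + mu x (D y))})"

definition inner_derivations :: "'v set \<Rightarrow> 'a set \<Rightarrow> ('a \<Rightarrow> 'v) \<Rightarrow> ('a \<Rightarrow> 'v) \<Rightarrow> nat \<Rightarrow>
    ((('v, 'a) path \<Rightarrow> 'k::field) \<Rightarrow> (('v, 'a) path \<Rightarrow> 'k)) set" where
  "inner_derivations V A s t m = (let L = trunc_carrier V A s t m; mu = trunc_mult V A s t m in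
     {D. \<exists>a\<in>L. D = (\<lambda>x. if x \<in> L then mu a x - mu x a else 0)})"

definition map_scale :: "'k::field \<Rightarrow> (('p \<Rightarrow> 'k) \<Rightarrow> ('p \<Rightarrow> 'k)) \<Rightarrow> (('p \<Rightarrow> 'k) \<Rightarrow> ('p \<Rightarrow> 'k))" where
  "map_scale c D = (\<lambda>x p. c * D x p)"

definition kdim :: "((('p \<Rightarrow> 'k::field) \<Rightarrow> ('p \<Rightarrow> 'k)) set) \<Rightarrow> nat" where
  "kdim S = vector_space.dim map_scale S"

text \<open>dim_k H^1(\<Lambda>,\<Lambda>) = dim_k (Der / Inn) = dim_k Der - dim_k Inn
  (Inn \<subseteq> Der are finite-dimensional here).\<close>
definition HH1_dim :: "'v set \<Rightarrow> 'a set \<Rightarrow> ('a \<Rightarrow> 'v) \<Rightarrow> ('a \<Rightarrow> 'v) \<Rightarrow> nat \<Rightarrow> 'k::field itself \<Rightarrow> int" where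
  "HH1_dim V A s t m _ =
     int (kdim (derivations V A s t m :: ((('v, 'a) path \<Rightarrow> 'k) \<Rightarrow> _) set))
     - int (kdim (inner_derivations V A s t m :: ((('v, 'a) path \<Rightarrow> 'k) \<Rightarrow> _) set))"

end

theory Submission
  imports Defs
begin

fun chn :: "('a \<Rightarrow> 'v) \<Rightarrow> ('a \<Rightarrow> 'v) \<Rightarrow> 'v \<Rightarrow> 'a list \<Rightarrow> bool" where
  "chn s t v [] = True"
| "chn s t v (a # as) = (s a = v \<and> chn s t (t a) as)"

lemma chn_iff:
  "chn s t v as \<longleftrightarrow> (as \<noteq> [] \<longrightarrow> s (hd as) = v) \<and>
     (\<forall>i. Suc i < length as \<longrightarrow> t (as ! i) = s (as ! Suc i))"
proof (induction as arbitrary: v)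
  case Nil
  then show ?case by simp
next
  case (Cons a as)
  have "(\<forall>i. Suc i < length (a # as) \<longrightarrow> t ((a # as) ! i) = s ((a # as) ! Suc i)) \<longleftrightarrow>
        (as \<noteq> [] \<longrightarrow> t a = s (hd as)) \<and> (\<forall>i. Suc i < length as \<longrightarrow> t (as ! i) = s (as ! Suc i))"
    (is "?l \<longleftrightarrow> ?r")
  proof
    assume l: ?l
    show ?r
    proof (intro conjI impI allI)
      assume "as \<noteq> []" then show "t a = s (hd as)" using l[rule_format, of 0] by (cases as) auto
    next
      fix i assume "Suc i < length as" then show "t (as ! i) = s (as ! Suc i)"
        using l[rule_format, of "Suc i"] by auto
    qed
  next
    assume r: ?r
    show ?l
    proof (intro allI impI)
      fix i assume "Suc i < length (a # as)"
      then show "t ((a # as) ! i) = s ((a # as) ! Suc i)"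
        using r by (cases i) (auto simp: hd_conv_nth)
    qed
  qed
  then show ?case using Cons.IH[of "t a"] by auto
qed

lemma is_path_iff: "is_path V A s t p \<longleftrightarrow> fst p \<in> V \<and> set (snd p) \<subseteq> A \<and> chn s t (fst p) (snd p)"
  unfolding is_path_def chn_iff by auto

lemma path_tgt_Cons: "path_tgt t (v, a # as) = path_tgt t (t a, as)"
  by (simp add: path_tgt_def)

lemma chn_append: "chn s t v (xs @ ys) \<longleftrightarrow> chn s t v xs \<and> chn s t (path_tgt t (v, xs)) ys"
  by (induction xs arbitrary: v) (auto simp: path_tgt_def)


definition pre :: "('v, 'a) path \<Rightarrow> nat \<Rightarrow> ('v, 'a) path" where
  "pre r i = (fst r, take i (snd r))"

definition suf :: "('a \<Rightarrow> 'v) \<Rightarrow> ('v, 'a) path \<Rightarrow> nat \<Rightarrow> ('v, 'a) path" where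
  "suf t r i = (path_tgt t (pre r i), drop i (snd r))"

definition sc :: "'k::field \<Rightarrow> ('p \<Rightarrow> 'k) \<Rightarrow> ('p \<Rightarrow> 'k)" where
  "sc c x = (\<lambda>p. c * x p)"

lemma sum_fun_apply: "(\<Sum>i\<in>I. f i) x = (\<Sum>i\<in>I. f i x)"
  by (induction I rule: infinite_finite_induct) auto

lemma sc_apply[simp]: "sc c x p = c * x p" by (simp add: sc_def)

lemma sc_sum: "sc c (\<Sum>i\<in>I. f i) = (\<Sum>i\<in>I. sc c (f i))"
  by (rule ext) (simp add: sum_fun_apply sum_distrib_left)

lemma sc_sc[simp]: "sc c (sc d x) = sc (c * d) x"
  by (rule ext) simp

lemma sc_add: "sc c (x + y) = sc c x + sc c y"
  by (rule ext) (simp add: algebra_simps)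

lemma sc_zero[simp]: "sc c 0 = 0" "sc 0 x = 0" "sc 1 x = x"
  by (auto simp: sc_def)

lemma path_cat_assoc: "path_cat (path_cat p q) w = path_cat p (path_cat q w)"
  by (simp add: path_cat_def)

lemma len_cat[simp]: "path_len (path_cat p q) = path_len p + path_len q"
  by (simp add: path_len_def path_cat_def)

lemma fst_cat[simp]: "fst (path_cat p q) = fst p"
  by (simp add: path_cat_def)

lemma tgt_cat: "path_tgt t p = fst q \<Longrightarrow> path_tgt t (path_cat p q) = path_tgt t q"
  by (auto simp: path_tgt_def path_cat_def)

lemma cat_pre_suf: "path_cat (pre r i) (suf t r i) = r"
  by (simp add: path_cat_def pre_def suf_def)

lemma tgt_suf: "path_tgt t (suf t r i) = path_tgt t r"
  by (auto simp: path_tgt_def suf_def pre_def)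

lemma fst_pre[simp]: "fst (pre r i) = fst r" by (simp add: pre_def)
lemma fst_suf: "fst (suf t r i) = path_tgt t (pre r i)" by (simp add: suf_def)

lemma (in vector_space) dim_family:
  assumes fin: "finite I" and ind: "\<And>c. (\<Sum>i\<in>I. c i *s g i) = 0 \<Longrightarrow> \<forall>i\<in>I. c i = 0"
    and sub: "g ` I \<subseteq> S" and sp: "S \<subseteq> span (g ` I)"
  shows "dim S = card I"
proof -
  have inj: "inj_on g I"
  proof (rule inj_onI, rule ccontr)
    fix i j assume i: "i \<in> I" and j: "j \<in> I" and eq: "g i = g j" and ne: "i \<noteq> j"
    define c :: "_ \<Rightarrow> 'a" where "c k = (if k = i then 1 else if k = j then - 1 else 0)" for k
    have "c k *s g k = (if k = i then g i else 0) + (if k = j then - g j else 0)" for k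
      using ne by (auto simp: c_def)
    then have "(\<Sum>k\<in>I. c k *s g k) = (\<Sum>k\<in>I. (if k = i then g i else 0)) + (\<Sum>k\<in>I. (if k = j then - g j else 0))"
      by (simp add: sum.distrib)
    also have "\<dots> = 0" using i j fin eq by simp
    finally have "\<forall>k\<in>I. c k = 0" by (rule ind)
    then have "c i = 0" using i by blast
    then show False by (simp add: c_def)
  qed
  have indep: "independent (g ` I)"
  proof (rule independent_if_scalars_zero)
    show "finite (g ` I)" using fin by simp
  next
    fix f x assume h: "(\<Sum>x\<in>g ` I. f x *s x) = 0" and x: "x \<in> g ` I"
    have "(\<Sum>i\<in>I. f (g i) *s g i) = 0" using h by (simp add: sum.reindex[OF inj])
    then have "\<forall>i\<in>I. f (g i) = 0" by (rule ind)
    then show "f x = 0" using x by auto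
  qed
  have "card (g ` I) = dim S" by (rule basis_card_eq_dim[OF sub sp indep])
  then show ?thesis using card_image[OF inj] by simp
qed

interpretation ms: vector_space "map_scale :: 'k::field \<Rightarrow> (('p \<Rightarrow> 'k) \<Rightarrow> ('p \<Rightarrow> 'k)) \<Rightarrow> _"
  by unfold_locales (auto simp: map_scale_def fun_eq_iff algebra_simps)

lemma kdim_eq: "kdim S = ms.dim S"
  by (simp add: kdim_def)

locale tq =
  fixes V :: "'v set" and A :: "'a set" and s t :: "'a \<Rightarrow> 'v" and m :: nat
  assumes quiv: "is_quiver V A s t" and finV: "finite V" and finA: "finite A"
    and conn: "connected_quiver V A s t" and acyc: "acyclic_quiver V A s t"
    and m2: "2 \<le> m"
begin

abbreviation "isp \<equiv> is_path V A s t"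
abbreviation "tg \<equiv> path_tgt t"
abbreviation "P \<equiv> short_paths V A s t m"

lemma tgt_in_V: "isp p \<Longrightarrow> tg p \<in> V"
  using quiv by (auto simp: is_path_iff path_tgt_def is_quiver_def intro!: last_in_set)

lemma isp_cat: "isp p \<Longrightarrow> isp q \<Longrightarrow> tg p = fst q \<Longrightarrow> isp (path_cat p q)"
  by (auto simp: is_path_iff path_cat_def chn_append)

lemma isp_catD1: "isp (path_cat p q) \<Longrightarrow> isp p"
  by (auto simp: is_path_iff path_cat_def chn_append)

lemma isp_catD2: "isp (path_cat p q) \<Longrightarrow> tg p = fst q \<Longrightarrow> isp q"
proof -
  assume a: "isp (path_cat p q)" and b: "tg p = fst q"
  then have "isp p" using isp_catD1 by blast
  then have "tg p \<in> V" by (rule tgt_in_V)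
  with a b show ?thesis
    by (auto simp: is_path_iff path_cat_def chn_append)
qed

lemma P_iff: "p \<in> P \<longleftrightarrow> isp p \<and> path_len p < m"
  by (simp add: short_paths_def)

lemma P_catD1: "path_cat p q \<in> P \<Longrightarrow> p \<in> P"
  by (auto simp: P_iff dest: isp_catD1)

lemma P_catD2: "path_cat p q \<in> P \<Longrightarrow> tg p = fst q \<Longrightarrow> q \<in> P"
  by (auto simp: P_iff dest: isp_catD2)

lemma P_cat: "p \<in> P \<Longrightarrow> q \<in> P \<Longrightarrow> tg p = fst q \<Longrightarrow> path_len p + path_len q < m \<Longrightarrow> path_cat p q \<in> P"
  by (auto simp: P_iff intro: isp_cat)

lemma finite_P: "finite P"
proof -
  have "P \<subseteq> V \<times> {as. set as \<subseteq> A \<and> length as \<le> m}"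
    by (auto simp: P_iff is_path_iff path_len_def)
  moreover have "finite (V \<times> {as. set as \<subseteq> A \<and> length as \<le> m})"
    using finV finA by (intro finite_cartesian_product finite_lists_length_le)
  ultimately show ?thesis by (rule finite_subset)
qed

lemma pre_P: "r \<in> P \<Longrightarrow> pre r i \<in> P"
  using P_catD1[of "pre r i" "suf t r i"] by (simp add: cat_pre_suf)

lemma suf_P: "r \<in> P \<Longrightarrow> suf t r i \<in> P"
  using P_catD2[of "pre r i" "suf t r i"] by (simp add: cat_pre_suf fst_suf)

lemma ev_P: "v \<in> V \<Longrightarrow> (v, []) \<in> P"
  using m2 by (auto simp: P_iff is_path_iff path_len_def)

lemma arr_P: "b \<in> A \<Longrightarrow> (s b, [b]) \<in> P"
  using m2 quiv by (auto simp: P_iff is_path_iff path_len_def is_quiver_def)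

lemma P_fst: "p \<in> P \<Longrightarrow> fst p \<in> V"
  by (auto simp: P_iff is_path_iff)

lemma P_tgt: "p \<in> P \<Longrightarrow> tg p \<in> V"
  by (auto simp: P_iff intro: tgt_in_V)


abbreviation L :: "(('v, 'a) path \<Rightarrow> 'k::field) set" where "L \<equiv> trunc_carrier V A s t m"
abbreviation mul :: "(('v, 'a) path \<Rightarrow> 'k::field) \<Rightarrow> _ \<Rightarrow> _" where "mul \<equiv> trunc_mult V A s t m"

definition bv :: "('v, 'a) path \<Rightarrow> ('v, 'a) path \<Rightarrow> 'k::field" where
  "bv r = (\<lambda>u. if u = r \<and> r \<in> P then 1 else 0)"

definition K :: "('v, 'a) path \<Rightarrow> ('v, 'a) path \<Rightarrow> ('v, 'a) path \<Rightarrow> 'k::field" where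
  "K p q = (if tg p = fst q then bv (path_cat p q) else 0)"

lemma K_apply: "K p q r = (if tg p = fst q \<and> path_cat p q = r \<and> r \<in> P then 1 else 0)"
  by (auto simp: K_def bv_def)

lemma L_iff: "x \<in> L \<longleftrightarrow> (\<forall>p. p \<notin> P \<longrightarrow> x p = 0)"
  by (simp add: trunc_carrier_def)

lemma L_zero: "x \<in> L \<Longrightarrow> p \<notin> P \<Longrightarrow> x p = 0"
  unfolding trunc_carrier_def by blast

lemma bv_L[simp]: "bv r \<in> L"
  by (simp add: L_iff bv_def)

lemma bv_notP: "r \<notin> P \<Longrightarrow> bv r = 0"
  by (rule ext) (simp add: bv_def)

lemma bv_apply2: "bv r u = (if u = r \<and> r \<in> P then 1 else 0)"
  by (simp add: bv_def)

lemma bv_apply: "u \<in> P \<Longrightarrow> bv r u = (if u = r then 1 else 0)"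
  by (auto simp: bv_def)

lemma mul_expand:
  "mul x y r = (\<Sum>p\<in>P. \<Sum>q\<in>P. x p * y q * K p q r)"
proof (cases "r \<in> P")
  case True
  let ?S = "{(p, q). p \<in> P \<and> q \<in> P \<and> tg p = fst q \<and> path_cat p q = r}"
  have S: "?S = {pq \<in> P \<times> P. tg (fst pq) = fst (snd pq) \<and> path_cat (fst pq) (snd pq) = r}"
    by auto
  have "mul x y r = (\<Sum>(p, q)\<in>?S. x p * y q)"
    using True by (simp add: trunc_mult_def path_src_def)
  also have "\<dots> = (\<Sum>pq\<in>P \<times> P. if tg (fst pq) = fst (snd pq) \<and> path_cat (fst pq) (snd pq) = r
                   then x (fst pq) * y (snd pq) else 0)"
    unfolding S by (subst sum.inter_filter) (auto simp: finite_P split_beta intro!: sum.cong)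
  also have "\<dots> = (\<Sum>p\<in>P. \<Sum>q\<in>P. if tg p = fst q \<and> path_cat p q = r then x p * y q else 0)"
    by (simp add: sum.cartesian_product split_beta)
  also have "\<dots> = (\<Sum>p\<in>P. \<Sum>q\<in>P. x p * y q * K p q r)"
    using True by (intro sum.cong refl) (auto simp: K_apply)
  finally show ?thesis .
next
  case False
  then show ?thesis by (simp add: trunc_mult_def K_apply)
qed

lemma K_notP1: "p \<notin> P \<Longrightarrow> K p q = 0"
  by (auto simp: K_def) (metis P_catD1 bv_notP)

lemma K_notP2: "q \<notin> P \<Longrightarrow> K p q = 0"
  by (auto simp: K_def) (metis P_catD2 bv_notP)

lemma mul_bv: "mul (bv p) (bv q) = K p q"
proof (rule ext)
  fix r
  show "mul (bv p) (bv q) r = K p q r"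
  proof (cases "p \<in> P \<and> q \<in> P")
    case True
    have "mul (bv p) (bv q) r = (\<Sum>p'\<in>P. if p' = p then (\<Sum>q'\<in>P. if q' = q then K p' q' r else 0) else 0)"
      unfolding mul_expand by (intro sum.cong refl) (auto simp: bv_apply intro!: sum.cong)
    then show ?thesis using True by (simp add: finite_P)
  next
    case False
    then show ?thesis
      by (auto simp: mul_expand bv_def K_notP1 K_notP2)
  qed
qed


lemma mul_L[simp]: "mul x y \<in> L"
  by (simp add: L_iff trunc_mult_def)

lemma zero_L[simp]: "0 \<in> L" by (simp add: L_iff)
lemma add_L[simp]: "x \<in> L \<Longrightarrow> y \<in> L \<Longrightarrow> x + y \<in> L" by (simp add: L_iff)
lemma diff_L[simp]: "x \<in> L \<Longrightarrow> y \<in> L \<Longrightarrow> x - y \<in> L" by (simp add: L_iff)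
lemma sc_L[simp]: "x \<in> L \<Longrightarrow> sc c x \<in> L" by (simp add: L_iff)
lemma sum_L[simp]: "(\<And>i. i \<in> I \<Longrightarrow> f i \<in> L) \<Longrightarrow> (\<Sum>i\<in>I. f i) \<in> L"
  by (induction I rule: infinite_finite_induct) auto
lemma K_L[simp]: "K p q \<in> L" by (simp add: K_def)

lemma L_expand: "x \<in> L \<Longrightarrow> x = (\<Sum>p\<in>P. sc (x p) (bv p))"
proof (rule ext)
  fix r assume x: "x \<in> L"
  show "x r = (\<Sum>p\<in>P. sc (x p) (bv p)) r"
  proof (cases "r \<in> P")
    case True
    have "(\<Sum>p\<in>P. sc (x p) (bv p)) r = (\<Sum>p\<in>P. if p = r then x p else 0)"
      by (simp add: sum_fun_apply) (intro sum.cong refl, auto simp: bv_def)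
    with True finite_P show ?thesis by simp
  next
    case False
    from x False have "x r = 0" unfolding L_iff by blast
    with False show ?thesis by (auto simp: sum_fun_apply bv_def intro!: sum.neutral)
  qed
qed

lemma mul_add_left: "mul (x + y) z = mul x z + mul y z"
  by (rule ext) (simp add: mul_expand ring_distribs sum.distrib)
lemma mul_add_right: "mul z (x + y) = mul z x + mul z y"
  by (rule ext) (simp add: mul_expand ring_distribs sum.distrib)
lemma mul_diff_left: "mul (x - y) z = mul x z - mul y z"
  by (rule ext) (simp add: mul_expand ring_distribs sum_subtractf)
lemma mul_diff_right: "mul z (x - y) = mul z x - mul z y"
  by (rule ext) (simp add: mul_expand ring_distribs sum_subtractf)
lemma mul_sc_left: "mul (sc c x) y = sc c (mul x y)"
  by (rule ext) (simp add: mul_expand sum_distrib_left mult.assoc)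
lemma mul_sc_right: "mul y (sc c x) = sc c (mul y x)"
  by (rule ext) (simp add: mul_expand sum_distrib_left mult.assoc mult.left_commute)
lemma mul_zero_left[simp]: "mul 0 y = 0"
  by (rule ext) (simp add: mul_expand)
lemma mul_zero_right[simp]: "mul y 0 = 0"
  by (rule ext) (simp add: mul_expand)
lemma mul_sum_left: "mul (\<Sum>i\<in>I. f i) z = (\<Sum>i\<in>I. mul (f i) z)"
proof (induction I rule: infinite_finite_induct)
  case (infinite I) then show ?case by (simp only: sum.infinite[OF infinite] mul_zero_left)
next
  case empty then show ?case by (simp only: sum.empty mul_zero_left)
next
  case (insert i I) then show ?case by (simp only: sum.insert[OF insert.hyps] mul_add_left insert.IH)
qed
lemma mul_sum_right: "mul z (\<Sum>i\<in>I. f i) = (\<Sum>i\<in>I. mul z (f i))"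
proof (induction I rule: infinite_finite_induct)
  case (infinite I) then show ?case by (simp only: sum.infinite[OF infinite] mul_zero_right)
next
  case empty then show ?case by (simp only: sum.empty mul_zero_right)
next
  case (insert i I) then show ?case by (simp only: sum.insert[OF insert.hyps] mul_add_right insert.IH)
qed

lemma mul_bv_assoc: "mul (mul (bv p) (bv q)) (bv w) = mul (bv p) (mul (bv q) (bv w))"
proof (cases "tg p = fst q")
  case True
  note pq = this
  show ?thesis
  proof (cases "tg q = fst w")
    case True
    then show ?thesis using pq
      by (simp add: mul_bv K_def tgt_cat path_cat_assoc)
  next
    case False
    then show ?thesis using pq
      by (simp add: mul_bv K_def tgt_cat)
  qed
next
  case False
  then show ?thesis
    by (simp add: mul_bv K_def)
qed

lemma mul_assoc:
  assumes x: "x \<in> L" and y: "y \<in> L" and z: "z \<in> L"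
  shows "mul (mul x y) z = mul x (mul y z)"
proof -
  define X where "X = (\<Sum>p\<in>P. sc (x p) (bv p))"
  define Y where "Y = (\<Sum>p\<in>P. sc (y p) (bv p))"
  define Z where "Z = (\<Sum>p\<in>P. sc (z p) (bv p))"
  have e: "x = X" "y = Y" "z = Z"
    using L_expand[OF x] L_expand[OF y] L_expand[OF z] by (simp_all add: X_def Y_def Z_def)
  have "mul (mul X Y) Z = mul X (mul Y Z)"
    by (simp add: X_def Y_def Z_def mul_sum_left mul_sum_right mul_sc_left mul_sc_right sc_sum
        mul_bv_assoc mult.assoc)
  then show ?thesis by (simp only: e)
qed


definition lin :: "((('v, 'a) path \<Rightarrow> 'k::field) \<Rightarrow> (('v, 'a) path \<Rightarrow> 'k)) \<Rightarrow> bool" where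
  "lin D \<longleftrightarrow> (\<forall>x. x \<notin> L \<longrightarrow> D x = 0) \<and> (\<forall>x\<in>L. D x \<in> L) \<and>
     (\<forall>x\<in>L. \<forall>y\<in>L. D (x + y) = D x + D y) \<and> (\<forall>c. \<forall>x\<in>L. D (sc c x) = sc c (D x))"

abbreviation Der :: "((('v, 'a) path \<Rightarrow> 'k::field) \<Rightarrow> (('v, 'a) path \<Rightarrow> 'k)) set" where
  "Der \<equiv> derivations V A s t m"

lemma Der_iff: "D \<in> Der \<longleftrightarrow> lin D \<and> (\<forall>x\<in>L. \<forall>y\<in>L. D (mul x y) = mul (D x) y + mul x (D y))"
  unfolding derivations_def Let_def lin_def sc_def by auto

lemma linD:
  assumes "lin D"
  shows "x \<notin> L \<Longrightarrow> D x = 0" "x \<in> L \<Longrightarrow> D x \<in> L"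
    "x \<in> L \<Longrightarrow> y \<in> L \<Longrightarrow> D (x + y) = D x + D y" "x \<in> L \<Longrightarrow> D (sc c x) = sc c (D x)"
  using assms unfolding lin_def by auto

lemma lin_zero: "lin D \<Longrightarrow> D 0 = 0"
  using linD(4)[of D 0 0] by simp

lemma lin_sum: "lin D \<Longrightarrow> (\<And>i. i \<in> I \<Longrightarrow> f i \<in> L) \<Longrightarrow> D (\<Sum>i\<in>I. f i) = (\<Sum>i\<in>I. D (f i))"
proof (induction I rule: infinite_finite_induct)
  case (infinite I) then show ?case by (simp only: sum.infinite[OF infinite.hyps] lin_zero)
next
  case empty then show ?case by (simp only: sum.empty lin_zero)
next
  case (insert i I)
  have "D (sum f (insert i I)) = D (f i + sum f I)" by (simp only: sum.insert[OF insert.hyps])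
  also have "\<dots> = D (f i) + D (sum f I)"
    using insert.prems by (intro linD(3)[OF insert.prems(1)]) auto
  also have "\<dots> = (\<Sum>i\<in>insert i I. D (f i))"
    using insert by (simp only: sum.insert[OF insert.hyps]) auto
  finally show ?case .
qed

lemma lin_expand: "lin D \<Longrightarrow> x \<in> L \<Longrightarrow> D x = (\<Sum>p\<in>P. sc (x p) (D (bv p)))"
  apply (subst L_expand, assumption)
  apply (subst lin_sum, assumption, simp)
  apply (intro sum.cong refl)
  apply (rule linD(4), auto)
  done

lemma lin_ext:
  assumes "lin D1" "lin D2" "\<And>p. p \<in> P \<Longrightarrow> D1 (bv p) = D2 (bv p)"
  shows "D1 = D2"
proof (rule ext)
  fix x
  show "D1 x = D2 x"
  proof (cases "x \<in> L")
    case True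
    show ?thesis
      unfolding lin_expand[OF assms(1) True] lin_expand[OF assms(2) True]
      by (intro sum.cong refl) (simp add: assms(3))
  next
    case False
    then show ?thesis using assms linD(1) by metis
  qed
qed

lemma map_scale_apply: "map_scale c D x = sc c (D x)"
  by (simp add: map_scale_def sc_def)

lemma map_sum_apply: "(\<Sum>i\<in>I. F i) x = (\<Sum>i\<in>I. F i x)"
  by (rule sum_fun_apply)

lemma sc_diff: "sc c (x - y) = sc c x - sc c y"
  by (rule ext) (simp add: algebra_simps)

lemma sc_mult_add: "sc (c * d) x = sc c (sc d x)" by simp

lemma lin_add: "lin D1 \<Longrightarrow> lin D2 \<Longrightarrow> lin (D1 + D2)"
  unfolding lin_def by (simp add: sc_add algebra_simps)

lemma lin_diff: "lin D1 \<Longrightarrow> lin D2 \<Longrightarrow> lin (D1 - D2)"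
  unfolding lin_def by (simp add: sc_diff algebra_simps)

lemma lin_scale: "lin D \<Longrightarrow> lin (map_scale c D)"
  unfolding lin_def by (simp add: map_scale_apply sc_add mult.commute)

lemma Der_lin: "D \<in> Der \<Longrightarrow> lin D" by (simp add: Der_iff)

lemma Der_add: "D1 \<in> Der \<Longrightarrow> D2 \<in> Der \<Longrightarrow> D1 + D2 \<in> Der"
  unfolding Der_iff by (simp add: lin_add mul_add_left mul_add_right linD)

lemma Der_diff: "D1 \<in> Der \<Longrightarrow> D2 \<in> Der \<Longrightarrow> D1 - D2 \<in> Der"
  unfolding Der_iff by (simp add: lin_diff mul_diff_left mul_diff_right linD)

lemma Der_scale: "D \<in> Der \<Longrightarrow> map_scale c D \<in> Der"
  unfolding Der_iff by (simp add: lin_scale map_scale_apply mul_sc_left mul_sc_right sc_add)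

lemma Der_zero: "0 \<in> Der"
  unfolding Der_iff lin_def by simp

lemma Der_sum: "(\<And>i. i \<in> I \<Longrightarrow> F i \<in> Der) \<Longrightarrow> (\<Sum>i\<in>I. F i) \<in> Der"
  by (induction I rule: infinite_finite_induct) (simp_all add: Der_zero Der_add)


definition ad :: "(('v, 'a) path \<Rightarrow> 'k::field) \<Rightarrow> (('v, 'a) path \<Rightarrow> 'k) \<Rightarrow> (('v, 'a) path \<Rightarrow> 'k)" where
  "ad z = (\<lambda>x. if x \<in> L then mul z x - mul x z else 0)"

lemma Inn_eq: "inner_derivations V A s t m = ad ` L"
  unfolding inner_derivations_def Let_def ad_def by auto

lemma ad_lin: "lin (ad z)"
  unfolding lin_def ad_def
  by (simp add: mul_add_left mul_add_right mul_sc_left mul_sc_right sc_diff)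

lemma ad_Der: assumes z: "(z :: ('v, 'a) path \<Rightarrow> 'k::field) \<in> L" shows "ad z \<in> Der"
  unfolding Der_iff
proof (intro conjI ad_lin ballI)
  fix x y :: "('v, 'a) path \<Rightarrow> 'k::field" assume x: "x \<in> L" and y: "y \<in> L"
  have "mul (mul z x) y - mul (mul x z) y + (mul x (mul z y) - mul x (mul y z)) =
        mul z (mul x y) - mul (mul x y) z"
    using mul_assoc[OF z x y] mul_assoc[OF x z y] mul_assoc[OF x y z] by simp
  then show "ad z (mul x y) = mul (ad z x) y + mul x (ad z y)"
    using x y by (simp add: ad_def mul_diff_left mul_diff_right)
qed

lemma ad_add: "ad (z1 + z2) = ad z1 + ad z2"
  by (rule ext) (simp add: ad_def mul_add_left mul_add_right)

lemma ad_diff: "ad (z1 - z2) = ad z1 - ad z2"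
  by (rule ext) (simp add: ad_def mul_diff_left mul_diff_right)

lemma ad_sc: "ad (sc c z) = map_scale c (ad z)"
  by (rule ext) (simp add: ad_def mul_sc_left mul_sc_right map_scale_apply sc_diff)

lemma ad_zero: "ad 0 = 0"
  by (rule ext) (simp add: ad_def)

lemma ad_sum: "ad (\<Sum>i\<in>I. f i) = (\<Sum>i\<in>I. ad (f i))"
proof (induction I rule: infinite_finite_induct)
  case (infinite I) then show ?case by (simp only: sum.infinite[OF infinite] ad_zero)
next
  case empty then show ?case by (simp only: sum.empty ad_zero)
next
  case (insert i I) then show ?case by (simp only: sum.insert[OF insert.hyps] ad_add insert.IH)
qed

lemma mul_ev_left: "mul (bv (v, [])) (bv q) = (if v = fst q then bv q else 0)"
  by (simp add: mul_bv K_def path_tgt_def path_cat_def)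

lemma mul_ev_right: "mul (bv q) (bv (w, [])) = (if tg q = w then bv q else 0)"
  by (simp add: mul_bv K_def path_cat_def)

lemma mul_ev_left_L:
  assumes y: "y \<in> L"
  shows "mul (bv (v, [])) y = (\<lambda>r. if fst r = v then y r else 0)"
proof -
  have "mul (bv (v, [])) y = (\<Sum>q\<in>P. sc (y q) (if v = fst q then bv q else 0))"
    by (subst L_expand[OF y]) (simp add: mul_sum_right mul_sc_right mul_ev_left)
  also have "\<dots> = (\<lambda>r. if fst r = v then y r else 0)"
  proof (rule ext)
    fix r
    have "(\<Sum>q\<in>P. sc (y q) (if v = fst q then bv q else 0)) r =
          (\<Sum>q\<in>P. if q = r then (if fst r = v then y r else 0) else 0)"
      unfolding sum_fun_apply by (intro sum.cong refl) (auto simp: bv_def)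
    also have "\<dots> = (if fst r = v then y r else 0)"
      using y by (auto simp: finite_P L_zero)
    finally show "(\<Sum>q\<in>P. sc (y q) (if v = fst q then bv q else 0)) r = (if fst r = v then y r else 0)" .
  qed
  finally show ?thesis .
qed

lemma mul_ev_right_L:
  assumes y: "y \<in> L"
  shows "mul y (bv (w, [])) = (\<lambda>r. if tg r = w then y r else 0)"
proof -
  have "mul y (bv (w, [])) = (\<Sum>q\<in>P. sc (y q) (if tg q = w then bv q else 0))"
    by (subst L_expand[OF y]) (simp add: mul_sum_left mul_sc_left mul_ev_right)
  also have "\<dots> = (\<lambda>r. if tg r = w then y r else 0)"
  proof (rule ext)
    fix r
    have "(\<Sum>q\<in>P. sc (y q) (if tg q = w then bv q else 0)) r =
          (\<Sum>q\<in>P. if q = r then (if tg r = w then y r else 0) else 0)"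
      unfolding sum_fun_apply by (intro sum.cong refl) (auto simp: bv_def)
    also have "\<dots> = (if tg r = w then y r else 0)"
      using y by (auto simp: finite_P L_zero)
    finally show "(\<Sum>q\<in>P. sc (y q) (if tg q = w then bv q else 0)) r = (if tg r = w then y r else 0)" .
  qed
  finally show ?thesis .
qed

definition one :: "('v, 'a) path \<Rightarrow> 'k::field" where
  "one = (\<Sum>v\<in>V. bv (v, []))"

lemma one_L[simp]: "one \<in> L" by (simp add: one_def)

lemma mul_one_left: assumes y: "y \<in> L" shows "mul one y = y"
proof (rule ext)
  fix r
  have "mul one y r = (\<Sum>v\<in>V. if fst r = v then y r else 0)"
    by (simp add: one_def mul_sum_left mul_ev_left_L[OF y] sum_fun_apply)
  also have "\<dots> = y r"
    using y finV L_zero[OF y, of r] P_fst[of r] by auto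
  finally show "mul one y r = y r" .
qed

lemma mul_one_right: assumes y: "y \<in> L" shows "mul y one = y"
proof (rule ext)
  fix r
  have "mul y one r = (\<Sum>v\<in>V. if tg r = v then y r else 0)"
    by (simp add: one_def mul_sum_right mul_ev_right_L[OF y] sum_fun_apply)
  also have "\<dots> = y r"
    using y finV L_zero[OF y, of r] P_tgt[of r] by auto
  finally show "mul y one r = y r" .
qed

lemma ad_one: "ad one = 0"
  by (rule ext) (simp add: ad_def mul_one_left mul_one_right)

lemma ad_ev:
  assumes z: "z \<in> L"
  shows "ad z (bv (w, [])) = (\<lambda>r. (if tg r = w then z r else 0) - (if fst r = w then z r else 0))"
  by (rule ext) (simp add: ad_def mul_ev_left_L[OF z] mul_ev_right_L[OF z])

lemma acyc_P: "p \<in> P \<Longrightarrow> 0 < path_len p \<Longrightarrow> fst p \<noteq> tg p"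
proof
  assume "p \<in> P" "0 < path_len p" "fst p = tg p"
  then have "isp p \<and> path_len p > 0 \<and> path_src p = tg p"
    by (auto simp: P_iff path_src_def)
  with acyc show False unfolding acyclic_quiver_def by blast
qed

lemma cent1:
  assumes z: "z \<in> L" and h: "\<And>w. w \<in> V \<Longrightarrow> ad z (bv (w, [])) = 0"
    and p: "p \<in> P" "0 < path_len p"
  shows "z p = 0"
proof -
  have "ad z (bv (tg p, [])) p = 0" using h[of "tg p"] P_tgt[OF p(1)] by simp
  then show ?thesis using acyc_P[OF p] by (simp add: ad_ev[OF z])
qed

lemma P_len0: "p \<in> P \<Longrightarrow> path_len p = 0 \<Longrightarrow> p = (fst p, [])"
  by (cases p) (simp add: path_len_def)

lemma mul_arr_at_left:
  assumes b: "b \<in> A"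
  shows "mul z (bv (s b, [b])) (s b, [b]) = z (s b, [])"
proof -
  have "mul z (bv (s b, [b])) (s b, [b]) = (\<Sum>p\<in>P. \<Sum>q\<in>P. if q = (s b, [b]) then z p * K p q (s b, [b]) else 0)"
    unfolding mul_expand by (intro sum.cong refl) (auto simp: bv_apply)
  also have "\<dots> = (\<Sum>p\<in>P. z p * K p (s b, [b]) (s b, [b]))"
    using arr_P[OF b] by (simp add: finite_P)
  also have "\<dots> = (\<Sum>p\<in>P. if p = (s b, []) then z p else 0)"
    using arr_P[OF b] by (intro sum.cong refl) (auto simp: K_apply path_cat_def path_tgt_def)
  also have "\<dots> = z (s b, [])"
    using ev_P quiv b by (simp add: finite_P is_quiver_def)
  finally show ?thesis .
qed

lemma mul_arr_at_right:
  assumes b: "b \<in> A"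
  shows "mul (bv (s b, [b])) z (s b, [b]) = z (t b, [])"
proof -
  have "mul (bv (s b, [b])) z (s b, [b]) = (\<Sum>p\<in>P. if p = (s b, [b]) then (\<Sum>q\<in>P. z q * K p q (s b, [b])) else 0)"
    unfolding mul_expand by (intro sum.cong refl) (auto simp: bv_apply sum_distrib_left mult.assoc)
  also have "\<dots> = (\<Sum>q\<in>P. z q * K (s b, [b]) q (s b, [b]))"
    using arr_P[OF b] by (simp add: finite_P)
  also have "\<dots> = (\<Sum>q\<in>P. if q = (t b, []) then z q else 0)"
    using arr_P[OF b] by (intro sum.cong refl) (auto simp: K_apply path_cat_def path_tgt_def)
  also have "\<dots> = z (t b, [])"
    using ev_P quiv b by (simp add: finite_P is_quiver_def)
  finally show ?thesis .
qed

lemma conn_const: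
  assumes h: "\<And>b. b \<in> A \<Longrightarrow> f (s b) = f (t b)" and u: "u \<in> V" and v: "v \<in> V"
  shows "f u = f v"
proof -
  have "(u, v) \<in> ({(s a, t a) | a. a \<in> A} \<union> {(t a, s a) | a. a \<in> A})\<^sup>*"
    using conn u v by (auto simp: connected_quiver_def)
  then show ?thesis
    by (induction rule: rtrancl_induct) (auto simp: h)
qed

lemma cent2:
  assumes z: "z \<in> L" and h: "ad z = 0" and u: "u \<in> V" and v: "v \<in> V"
  shows "z (u, []) = z (v, [])"
proof (rule conn_const[OF _ u v, where f = "\<lambda>w. z (w, [])"])
  fix b assume b: "b \<in> A"
  have "ad z (bv (s b, [b])) (s b, [b]) = 0" using h by simp
  then show "z (s b, []) = z (t b, [])"
    by (simp add: ad_def mul_arr_at_left[OF b] mul_arr_at_right[OF b])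
qed


lemma bv_long: "m \<le> path_len r \<Longrightarrow> bv r = 0"
  by (rule bv_notP) (simp add: P_iff)

lemma mul_bv_ex: "\<exists>c. mul (bv x) (bv y) = sc c (bv (path_cat x y))"
  by (cases "tg x = fst y") (auto simp: mul_bv K_def intro: exI[of _ 0] exI[of _ 1])

lemma prod4a: "\<exists>c::'k::field. mul (mul (mul (bv x1) (bv x2)) (bv x3)) (bv x4) =
   sc c (bv (path_cat (path_cat (path_cat x1 x2) x3) x4))"
proof -
  obtain c1 :: 'k where c1: "mul (bv x1) (bv x2) = sc c1 (bv (path_cat x1 x2))" using mul_bv_ex by blast
  obtain c2 :: 'k where c2: "mul (bv (path_cat x1 x2)) (bv x3) = sc c2 (bv (path_cat (path_cat x1 x2) x3))"
    using mul_bv_ex by blast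
  obtain c3 :: 'k where c3: "mul (bv (path_cat (path_cat x1 x2) x3)) (bv x4) =
      sc c3 (bv (path_cat (path_cat (path_cat x1 x2) x3) x4))"
    using mul_bv_ex by blast
  show ?thesis by (rule exI[of _ "c1 * c2 * c3"]) (simp add: c1 c2 c3 mul_sc_left)
qed

lemma prod4b: "\<exists>c::'k::field. mul (bv x0) (mul (mul (bv x1) (bv x2)) (bv x3)) =
   sc c (bv (path_cat x0 (path_cat (path_cat x1 x2) x3)))"
proof -
  obtain c1 :: 'k where c1: "mul (bv x1) (bv x2) = sc c1 (bv (path_cat x1 x2))" using mul_bv_ex by blast
  obtain c2 :: 'k where c2: "mul (bv (path_cat x1 x2)) (bv x3) = sc c2 (bv (path_cat (path_cat x1 x2) x3))"
    using mul_bv_ex by blast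
  obtain c3 :: 'k where c3: "mul (bv x0) (bv (path_cat (path_cat x1 x2) x3)) =
      sc c3 (bv (path_cat x0 (path_cat (path_cat x1 x2) x3)))"
    using mul_bv_ex by blast
  show ?thesis by (rule exI[of _ "c1 * c2 * c3"]) (simp add: c1 c2 c3 mul_sc_left mul_sc_right)
qed

lemma sum_lessThan_add: "(\<Sum>i<k + (n::nat). f i) = (\<Sum>i<k. f i) + (\<Sum>j<n. f (k + j))"
  by (induction n) (simp_all add: add.assoc)

definition T :: "'a \<Rightarrow> ('v, 'a) path \<Rightarrow> ('v, 'a) path \<Rightarrow> ('v, 'a) path \<Rightarrow> 'k::field" where
  "T a e p = (\<Sum>i<path_len p. if snd p ! i = a then mul (mul (bv (pre p i)) (bv e)) (bv (suf t p (Suc i))) else 0)"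

definition Dae :: "'a \<Rightarrow> ('v, 'a) path \<Rightarrow> (('v, 'a) path \<Rightarrow> 'k::field) \<Rightarrow> (('v, 'a) path \<Rightarrow> 'k)" where
  "Dae a e = (\<lambda>x. if x \<in> L then (\<Sum>p\<in>P. sc (x p) (T a e p)) else 0)"

lemma T_L[simp]: "T a e p \<in> L" by (simp add: T_def)

lemma sc_add_left: "sc (c + d) x = sc c x + sc d x"
  by (rule ext) (simp add: ring_distribs)

lemma Dae_lin: "lin (Dae a e)"
  unfolding lin_def Dae_def
  by (simp add: sum.distrib sc_add_left sc_sum)

lemma Dae_bv: "Dae a e (bv r) = (if r \<in> P then T a e r else 0)"
proof -
  have "(\<Sum>p\<in>P. sc (bv r p) (T a e p)) = (\<Sum>p\<in>P. if p = r then T a e r else 0)"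
    by (intro sum.cong refl) (auto simp: bv_def)
  then show ?thesis by (simp add: Dae_def finite_P)
qed

lemma mul_if_left: "mul (if c then x else 0) y = (if c then mul x y else 0)" by simp
lemma mul_if_right: "mul y (if c then x else 0) = (if c then mul y x else 0)" by simp

lemma T_long: assumes e: "snd e \<noteq> []" and len: "m \<le> path_len p + path_len q"
  shows "mul (T a e p :: ('v, 'a) path \<Rightarrow> 'k::field) (bv q) = 0" "mul (bv p) (T a e q :: ('v, 'a) path \<Rightarrow> 'k) = 0"
proof -
  have le: "1 \<le> length (snd e)" using e by (cases "snd e") auto
  have H1: "mul (mul (mul (bv (pre p i)) (bv e)) (bv (suf t p (Suc i)))) (bv q) = (0 :: ('v, 'a) path \<Rightarrow> 'k)" if i: "i < path_len p" for i
  proof -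
    obtain c :: 'k where c: "mul (mul (mul (bv (pre p i)) (bv e)) (bv (suf t p (Suc i)))) (bv q) =
      sc c (bv (path_cat (path_cat (path_cat (pre p i) e) (suf t p (Suc i))) q))"
      using prod4a by blast
    have "m \<le> path_len (path_cat (path_cat (path_cat (pre p i) e) (suf t p (Suc i))) q)"
      using i len le by (simp add: pre_def suf_def path_len_def path_cat_def)
    then show ?thesis by (metis c bv_long sc_zero(1))
  qed
  show "mul (T a e p) (bv q) = (0 :: ('v, 'a) path \<Rightarrow> 'k)"
    unfolding T_def mul_sum_left by (rule sum.neutral) (simp add: H1)
  have H2: "mul (bv p) (mul (mul (bv (pre q i)) (bv e)) (bv (suf t q (Suc i)))) = (0 :: ('v, 'a) path \<Rightarrow> 'k)" if i: "i < path_len q" for i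
  proof -
    obtain c :: 'k where c: "mul (bv p) (mul (mul (bv (pre q i)) (bv e)) (bv (suf t q (Suc i)))) =
      sc c (bv (path_cat p (path_cat (path_cat (pre q i) e) (suf t q (Suc i)))))"
      using prod4b by blast
    have "m \<le> path_len (path_cat p (path_cat (path_cat (pre q i) e) (suf t q (Suc i))))"
      using i len le by (simp add: pre_def suf_def path_len_def path_cat_def)
    then show ?thesis by (metis c bv_long sc_zero(1))
  qed
  show "mul (bv p) (T a e q) = (0 :: ('v, 'a) path \<Rightarrow> 'k)"
    unfolding T_def mul_sum_right by (rule sum.neutral) (simp add: H2)
qed


lemma mul_expand_L:
  assumes x: "x \<in> L" and y: "y \<in> L"
  shows "mul x y = (\<Sum>p\<in>P. \<Sum>q\<in>P. sc (x p * y q) (mul (bv p) (bv q)))"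
proof -
  have "mul x y = mul (\<Sum>p\<in>P. sc (x p) (bv p)) (\<Sum>q\<in>P. sc (y q) (bv q))"
    using L_expand[OF x] L_expand[OF y] by metis
  also have "\<dots> = (\<Sum>p\<in>P. \<Sum>q\<in>P. sc (x p * y q) (mul (bv p) (bv q)))"
    by (simp add: mul_sum_left mul_sum_right mul_sc_left mul_sc_right sc_sum mult.commute) (rule sum.swap)
  finally show ?thesis .
qed

lemma der_from_basis:
  assumes D: "lin (D :: (('v, 'a) path \<Rightarrow> 'k::field) \<Rightarrow> _)"
    and B: "\<And>p q. p \<in> P \<Longrightarrow> q \<in> P \<Longrightarrow>
      D (mul (bv p) (bv q)) = mul (D (bv p)) (bv q) + mul (bv p) (D (bv q))"
  shows "D \<in> Der"
  unfolding Der_iff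
proof (intro conjI D ballI)
  fix x y :: "('v, 'a) path \<Rightarrow> 'k" assume x: "x \<in> L" and y: "y \<in> L"
  have DL: "D (bv p) \<in> L" for p using linD(2)[OF D] by simp
  have "D (mul x y) = (\<Sum>p\<in>P. D (\<Sum>q\<in>P. sc (x p * y q) (mul (bv p) (bv q))))"
    unfolding mul_expand_L[OF x y] by (rule lin_sum[OF D]) simp
  also have "\<dots> = (\<Sum>p\<in>P. \<Sum>q\<in>P. sc (x p * y q) (D (mul (bv p) (bv q))))"
    by (intro sum.cong refl) (simp add: lin_sum[OF D] linD(4)[OF D])
  also have "\<dots> = (\<Sum>p\<in>P. \<Sum>q\<in>P. sc (x p * y q) (mul (D (bv p)) (bv q)) + sc (x p * y q) (mul (bv p) (D (bv q))))"
    by (intro sum.cong refl) (simp add: B sc_add)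
  also have "\<dots> = mul (\<Sum>p\<in>P. sc (x p) (D (bv p))) (\<Sum>q\<in>P. sc (y q) (bv q)) +
                  mul (\<Sum>p\<in>P. sc (x p) (bv p)) (\<Sum>q\<in>P. sc (y q) (D (bv q)))"
    by (simp add: sum.distrib mul_sum_left mul_sum_right mul_sc_left mul_sc_right sc_sum mult.commute)
       (intro arg_cong2[where f="(+)"] sum.swap)
  also have "\<dots> = mul (D x) y + mul x (D y)"
    using L_expand[OF x] L_expand[OF y] lin_expand[OF D x] lin_expand[OF D y] by metis
  finally show "D (mul x y) = mul (D x) y + mul x (D y)" .
qed

lemma pre_cat1: "i \<le> path_len p \<Longrightarrow> pre (path_cat p q) i = pre p i"
  by (simp add: pre_def path_cat_def path_len_def)

lemma suf_cat1: "i < path_len p \<Longrightarrow> suf t (path_cat p q) (Suc i) = path_cat (suf t p (Suc i)) q"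
  by (simp add: suf_def pre_def path_cat_def path_len_def)

lemma pre_cat2: "pre (path_cat p q) (path_len p + j) = path_cat p (pre q j)"
  by (simp add: pre_def path_cat_def path_len_def)

lemma suf_cat2: "j < path_len q \<Longrightarrow> suf t (path_cat p q) (Suc (path_len p + j)) = suf t q (Suc j)"
  by (auto simp: suf_def pre_def path_cat_def path_len_def path_tgt_def)

lemma nth_cat1: "i < path_len p \<Longrightarrow> snd (path_cat p q) ! i = snd p ! i"
  by (simp add: path_cat_def path_len_def nth_append)

lemma nth_cat2: "snd (path_cat p q) ! (path_len p + j) = snd q ! j"
  by (simp add: path_cat_def path_len_def)

lemma T_cat_split:
  assumes c: "tg p = fst q"
  shows "(T a e (path_cat p q) :: ('v, 'a) path \<Rightarrow> 'k::field) = mul (T a e p) (bv q) + mul (bv p) (T a e q)"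
proof -
  let ?g = "\<lambda>i. if snd (path_cat p q) ! i = a then mul (mul (bv (pre (path_cat p q) i)) (bv e))
     (bv (suf t (path_cat p q) (Suc i))) else (0 :: ('v, 'a) path \<Rightarrow> 'k)"
  have "T a e (path_cat p q) = (\<Sum>i<path_len p. ?g i) + (\<Sum>j<path_len q. ?g (path_len p + j))"
    unfolding T_def len_cat by (rule sum_lessThan_add)
  moreover have "(\<Sum>i<path_len p. ?g i) = mul (T a e p) (bv q)"
    unfolding T_def mul_sum_left
  proof (intro sum.cong refl)
    fix i assume "i \<in> {..<path_len p}"
    then have i: "i < path_len p" by simp
    have eq: "bv (suf t (path_cat p q) (Suc i)) = mul (bv (suf t p (Suc i))) (bv q)"
      using c by (simp add: suf_cat1[OF i] mul_bv K_def tgt_suf)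
    show "?g i = mul (if snd p ! i = a then mul (mul (bv (pre p i)) (bv e)) (bv (suf t p (Suc i))) else 0) (bv q)"
      using i by (simp add: nth_cat1 pre_cat1 eq mul_assoc)
  qed
  moreover have "(\<Sum>j<path_len q. ?g (path_len p + j)) = mul (bv p) (T a e q)"
    unfolding T_def mul_sum_right
  proof (intro sum.cong refl)
    fix j assume "j \<in> {..<path_len q}"
    then have j: "j < path_len q" by simp
    have eq: "bv (pre (path_cat p q) (path_len p + j)) = mul (bv p) (bv (pre q j))"
      using c by (simp add: pre_cat2 mul_bv K_def)
    show "?g (path_len p + j) = mul (bv p) (if snd q ! j = a then mul (mul (bv (pre q j)) (bv e)) (bv (suf t q (Suc j))) else 0)"
      using j by (simp add: nth_cat2 suf_cat2 eq mul_assoc)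
  qed
  ultimately show ?thesis by simp
qed

lemma T_noncomp:
  assumes c: "tg p \<noteq> fst q"
  shows "mul (T a e p :: ('v, 'a) path \<Rightarrow> 'k::field) (bv q) = 0" "mul (bv p) (T a e q :: ('v, 'a) path \<Rightarrow> 'k) = 0"
proof -
  have H1: "mul (mul (mul (bv (pre p i)) (bv e)) (bv (suf t p (Suc i)))) (bv q) = (0 :: ('v, 'a) path \<Rightarrow> 'k)" for i
    using c by (simp add: mul_assoc mul_bv K_def tgt_suf)
  show "mul (T a e p) (bv q) = (0 :: ('v, 'a) path \<Rightarrow> 'k)"
    unfolding T_def mul_sum_left by (rule sum.neutral) (simp add: H1)
  have H2: "mul (bv p) (mul (mul (bv (pre q i)) (bv e)) (bv (suf t q (Suc i)))) = (0 :: ('v, 'a) path \<Rightarrow> 'k)" for i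
    using c by (simp add: mul_assoc[symmetric] mul_bv K_def)
  show "mul (bv p) (T a e q) = (0 :: ('v, 'a) path \<Rightarrow> 'k)"
    unfolding T_def mul_sum_right by (rule sum.neutral) (simp add: H2)
qed

lemma Dae_Der:
  assumes e: "snd e \<noteq> []"
  shows "(Dae a e :: (('v, 'a) path \<Rightarrow> 'k::field) \<Rightarrow> _) \<in> Der"
proof (rule der_from_basis[OF Dae_lin])
  fix p q assume p: "p \<in> P" and q: "q \<in> P"
  show "(Dae a e :: (('v, 'a) path \<Rightarrow> 'k::field) \<Rightarrow> _) (mul (bv p) (bv q)) =
        mul (Dae a e (bv p)) (bv q) + mul (bv p) (Dae a e (bv q))"
  proof (cases "tg p = fst q")
    case False
    then show ?thesis using p q
      by (simp add: mul_bv K_def Dae_bv T_noncomp lin_zero[OF Dae_lin])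
  next
    case True
    show ?thesis
    proof (cases "path_cat p q \<in> P")
      case True
      with \<open>tg p = fst q\<close> p q show ?thesis
        by (simp add: mul_bv K_def Dae_bv T_cat_split)
    next
      case False
      have "isp (path_cat p q)" using p q \<open>tg p = fst q\<close> by (auto simp: P_iff intro: isp_cat)
      with False have "m \<le> path_len p + path_len q" by (auto simp: P_iff)
      with False \<open>tg p = fst q\<close> p q e show ?thesis
        by (simp add: mul_bv K_def Dae_bv T_long bv_notP lin_zero[OF Dae_lin])
    qed
  qed
qed

lemma Dae_ev: "v \<in> V \<Longrightarrow> Dae a e (bv (v, [])) = 0"
  using ev_P by (simp add: Dae_bv T_def path_len_def)

lemma Dae_arr:
  assumes b: "b \<in> A" and e1: "fst e = s a" and e2: "tg e = t a"
  shows "Dae a e (bv (s b, [b])) = (if b = a then bv e else 0)"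
proof -
  have "Dae a e (bv (s b, [b])) = T a e (s b, [b])" using arr_P[OF b] by (simp add: Dae_bv)
  also have "\<dots> = (if b = a then mul (mul (bv (s b, [])) (bv e)) (bv (t b, [])) else 0)"
    by (simp add: T_def path_len_def pre_def suf_def path_tgt_def)
  also have "\<dots> = (if b = a then bv e else 0)"
    using e1 e2 by (simp add: mul_ev_left mul_ev_right)
  finally show ?thesis .
qed


abbreviation "PP \<equiv> parallel_pairs V A s t m"
definition N :: "('v, 'a) path set" where "N = {p \<in> P. 0 < path_len p}"

lemma PP_iff: "(a, e) \<in> PP \<longleftrightarrow> a \<in> A \<and> e \<in> P \<and> fst e = s a \<and> tg e = t a"
  by (simp add: parallel_pairs_def path_src_def)

lemma finite_PP: "finite PP"
proof -
  have "PP \<subseteq> A \<times> P" by (auto simp: parallel_pairs_def)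
  then show ?thesis using finA finite_P by (meson finite_SigmaI finite_subset)
qed

lemma PP_nonempty_path: assumes "(a, e) \<in> PP" shows "snd e \<noteq> []"
proof
  assume h: "snd e = []"
  have a: "a \<in> A" "fst e = s a" "tg e = t a" using assms by (auto simp: PP_iff)
  then have "s a = t a" using h by (simp add: path_tgt_def)
  then have "(s a, [a]) \<in> P" "0 < path_len (s a, [a])" "fst (s a, [a]) = tg (s a, [a])"
    using arr_P[OF a(1)] by (auto simp: path_len_def path_tgt_def)
  then show False using acyc_P by blast
qed

lemma finite_N: "finite N" using finite_P by (simp add: N_def)

lemma P_split: "(\<Sum>p\<in>P. f p) = (\<Sum>p\<in>N. f p) + (\<Sum>v\<in>V. f (v, []))"
proof -
  have P: "P = N \<union> (\<lambda>v. (v, [])) ` V"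
  proof (intro equalityI subsetI)
    fix p assume p: "p \<in> P"
    show "p \<in> N \<union> (\<lambda>v. (v, [])) ` V"
    proof (cases "path_len p = 0")
      case True
      then have "p = (fst p, [])" by (rule P_len0[OF p])
      with P_fst[OF p] show ?thesis by (metis UnI2 image_eqI)
    next
      case False
      with p show ?thesis by (simp add: N_def)
    qed
  next
    fix p assume "p \<in> N \<union> (\<lambda>v. (v, [])) ` V"
    then show "p \<in> P" using ev_P by (auto simp: N_def)
  qed
  have d: "N \<inter> (\<lambda>v. (v, [])) ` V = {}" by (auto simp: N_def path_len_def)
  have "(\<Sum>p\<in>P. f p) = (\<Sum>p\<in>N. f p) + (\<Sum>p\<in>(\<lambda>v. (v, [])) ` V. f p)"
    unfolding P using finite_N finV d by (intro sum.union_disjoint) auto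
  also have "(\<Sum>p\<in>(\<lambda>v. (v, [])) ` V. f p) = (\<Sum>v\<in>V. f (v, []))"
    by (subst sum.reindex) (auto simp: inj_on_def)
  finally show ?thesis .
qed

lemma card_P: "card P = card N + card V"
  using P_split[of "\<lambda>_. 1::nat"] by simp

lemma der_zero:
  assumes D: "D \<in> Der" and hv: "\<And>v. v \<in> V \<Longrightarrow> D (bv (v, [])) = 0"
    and ha: "\<And>b. b \<in> A \<Longrightarrow> D (bv (s b, [b])) = 0"
  shows "D = 0"
proof -
  have lD: "lin D" using D by (rule Der_lin)
  have "\<forall>r. r \<in> P \<longrightarrow> path_len r = n \<longrightarrow> D (bv r) = 0" for n
  proof (induction n)
    case 0
    then show ?case using hv P_fst P_len0 by metis
  next
    case (Suc k)
    show ?case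
    proof (intro allI impI)
      fix r assume r: "r \<in> P" "path_len r = Suc k"
      define b where "b = snd r ! k"
      have "drop k (snd r) = [b]"
        using r(2) Cons_nth_drop_Suc[of k "snd r"] by (simp add: b_def path_len_def)
      then have sf: "suf t r k = (tg (pre r k), [b])"
        by (simp add: suf_def)
      have "isp (suf t r k)" using suf_P[OF r(1)] by (simp add: P_iff)
      then have b: "b \<in> A" "s b = tg (pre r k)" using sf by (auto simp: is_path_iff)
      have sf2: "suf t r k = (s b, [b])" using sf b by simp
      have eq: "bv r = mul (bv (pre r k)) (bv (s b, [b]))"
        using b(2) cat_pre_suf[where r = r and i = k and t = t] sf2 by (simp add: mul_bv K_def)
      have z1: "D (bv (pre r k)) = 0"
        using Suc.IH pre_P[OF r(1)] r(2) by (simp add: pre_def path_len_def zero_fun_def)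
      have "D (bv r) = mul (D (bv (pre r k))) (bv (s b, [b])) + mul (bv (pre r k)) (D (bv (s b, [b])))"
        unfolding eq using D by (simp add: Der_iff)
      then show "D (bv r) = 0"
        using z1 ha[OF b(1)] by simp
    qed
  qed
  then have bz: "\<And>r. r \<in> P \<Longrightarrow> D (bv r) = 0" by blast
  show ?thesis
  proof (rule ext)
    fix x show "D x = 0 x"
    proof (cases "x \<in> L")
      case True
      have "D x = (\<Sum>p\<in>P. sc (x p) (D (bv p)))" by (rule lin_expand[OF lD True])
      also have "\<dots> = 0" by (rule sum.neutral) (simp add: bz)
      finally show ?thesis by simp
    next
      case False
      then show ?thesis using linD(1)[OF lD] by simp
    qed
  qed
qed

lemma der_parallel:
  assumes D: "D \<in> Der" and hv: "\<And>v. v \<in> V \<Longrightarrow> D (bv (v, [])) = 0" and b: "b \<in> A"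
    and nz: "D (bv (s b, [b])) r \<noteq> 0"
  shows "(b, r) \<in> PP"
proof -
  let ?y = "D (bv (s b, [b]))"
  have lD: "lin D" using D by (rule Der_lin)
  have yL: "?y \<in> L" using linD(2)[OF lD] by simp
  have sbV: "s b \<in> V" "t b \<in> V" using quiv b by (auto simp: is_quiver_def)
  have "bv (s b, [b]) = mul (bv (s b, [])) (bv (s b, [b]))" by (simp add: mul_ev_left)
  then have "?y = mul (D (bv (s b, []))) (bv (s b, [b])) + mul (bv (s b, [])) ?y"
    using D by (metis Der_iff bv_L)
  then have y1: "?y = (\<lambda>r. if fst r = s b then ?y r else 0)"
    using hv[OF sbV(1)] by (simp add: mul_ev_left_L[OF yL])
  have "bv (s b, [b]) = mul (bv (s b, [b])) (bv (t b, []))" by (simp add: mul_ev_right path_tgt_def)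
  then have "?y = mul ?y (bv (t b, [])) + mul (bv (s b, [b])) (D (bv (t b, [])))"
    using D by (metis Der_iff bv_L)
  then have y2: "?y = (\<lambda>r. if tg r = t b then ?y r else 0)"
    using hv[OF sbV(2)] by (simp add: mul_ev_right_L[OF yL])
  have "fst r = s b" using nz y1 by (metis (mono_tags, lifting))
  moreover have "tg r = t b" using nz y2 by (metis (mono_tags, lifting))
  moreover have "r \<in> P" using nz L_zero[OF yL] by blast
  ultimately show ?thesis using b by (simp add: PP_iff)
qed


lemma mul_uminus_left: "mul (- x) y = - mul x y"
  by (rule ext) (simp add: mul_expand sum_negf)

lemma ad_center:
  assumes D: "(D :: (('v, 'a) path \<Rightarrow> 'k::field) \<Rightarrow> _) \<in> Der" and w: "w \<in> V"
  shows "ad (\<Sum>v\<in>V. mul (D (bv (v, []))) (bv (v, []))) (bv (w, [])) = D (bv (w, []))"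
proof -
  define e :: "'v \<Rightarrow> ('v, 'a) path \<Rightarrow> 'k" where "e v = bv (v, [])" for v
  define d where "d v = D (e v)" for v
  define z where "z = (\<Sum>v\<in>V. mul (d v) (e v))"
  have lD: "lin D" using D by (rule Der_lin)
  have eL: "e v \<in> L" for v by (simp add: e_def)
  have dL: "d v \<in> L" for v using linD(2)[OF lD eL] by (simp add: d_def)
  have ee: "mul (e v) (e u) = (if v = u then e v else 0)" for v u
    by (simp add: e_def mul_ev_left)
  have Leib: "D (mul (e u) (e v)) = mul (d u) (e v) + mul (e u) (d v)" for u v
    using D eL by (simp add: Der_iff d_def)
  have L1: "mul z (e w) = mul (d w) (e w)"
  proof -
    have "mul z (e w) = (\<Sum>v\<in>V. mul (d v) (mul (e v) (e w)))"
      by (simp add: z_def mul_sum_left mul_assoc dL eL)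
    also have "\<dots> = (\<Sum>v\<in>V. if v = w then mul (d w) (e w) else 0)"
      by (intro sum.cong refl) (simp add: ee)
    also have "\<dots> = mul (d w) (e w)" using w finV by simp
    finally show ?thesis .
  qed
  have Lb: "mul (mul (e w) (d v)) (e v) = (if v = w then 0 else - mul (d w) (e v))" for v
  proof (cases "v = w")
    case True
    have "d w = mul (d w) (e w) + mul (e w) (d w)"
      using Leib[of w w] by (simp add: ee d_def)
    then have "mul (e w) (d w) = d w - mul (d w) (e w)" by (simp add: algebra_simps)
    then have "mul (mul (e w) (d w)) (e w) = mul (d w) (e w) - mul (d w) (mul (e w) (e w))"
      by (simp add: mul_diff_left mul_assoc dL eL)
    then show ?thesis using True by (simp add: ee)
  next
    case False
    have "0 = mul (d w) (e v) + mul (e w) (d v)"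
      using Leib[of w v] False lin_zero[OF lD] by (simp add: ee)
    then have "mul (e w) (d v) = - mul (d w) (e v)" by (simp add: algebra_simps eq_neg_iff_add_eq_0)
    then have "mul (mul (e w) (d v)) (e v) = - mul (d w) (mul (e v) (e v))"
      by (simp add: mul_uminus_left mul_assoc dL eL)
    then show ?thesis using False by (simp add: ee)
  qed
  have L2: "mul (e w) z = mul (d w) (e w) - d w"
  proof -
    have "mul (e w) z = (\<Sum>v\<in>V. mul (mul (e w) (d v)) (e v))"
      by (simp add: z_def mul_sum_right mul_assoc dL eL)
    also have "\<dots> = (\<Sum>v\<in>V. (if v = w then mul (d w) (e v) else 0) - mul (d w) (e v))"
      by (intro sum.cong refl) (simp add: Lb)
    also have "\<dots> = mul (d w) (e w) - mul (d w) one"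
      using w finV by (simp add: sum_subtractf one_def mul_sum_right e_def)
    also have "\<dots> = mul (d w) (e w) - d w" by (simp add: mul_one_right dL)
    finally show ?thesis .
  qed
  have "ad z (e w) = d w"
    using eL[of w] by (simp add: ad_def L1 L2)
  then show ?thesis by (simp add: z_def d_def e_def)
qed


definition gD :: "('a \<times> ('v, 'a) path) + ('v, 'a) path \<Rightarrow> ((('v, 'a) path \<Rightarrow> 'k::field) \<Rightarrow> (('v, 'a) path \<Rightarrow> 'k))" where
  "gD i = (case i of Inl ae \<Rightarrow> Dae (fst ae) (snd ae) | Inr p \<Rightarrow> ad (bv p))"

lemma map_sum_apply2: "(\<Sum>i\<in>I. F i) x r = (\<Sum>i\<in>I. F i x r)"
  by (simp add: sum_fun_apply)

lemma gD_indep: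
  assumes h: "(\<Sum>i\<in>PP <+> N. map_scale (c i) (gD i)) = (0 :: (('v, 'a) path \<Rightarrow> 'k::field) \<Rightarrow> _)"
  shows "\<forall>i\<in>PP <+> N. c i = 0"
proof -
  define E :: "(('v, 'a) path \<Rightarrow> 'k) \<Rightarrow> _" where
    "E = (\<Sum>ae\<in>PP. map_scale (c (Inl ae)) (Dae (fst ae) (snd ae)))"
  define z :: "('v, 'a) path \<Rightarrow> 'k" where "z = (\<Sum>p\<in>N. sc (c (Inr p)) (bv p))"
  have F: "(\<Sum>p\<in>N. map_scale (c (Inr p)) (gD (Inr p) :: (('v, 'a) path \<Rightarrow> 'k) \<Rightarrow> _)) = ad z"
    by (simp add: gD_def z_def ad_sum ad_sc)
  have E': "(\<Sum>ae\<in>PP. map_scale (c (Inl ae)) (gD (Inl ae) :: (('v, 'a) path \<Rightarrow> 'k) \<Rightarrow> _)) = E"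
    by (simp add: gD_def E_def)
  have sum0: "E + ad z = 0"
    using h unfolding sum.Plus[OF finite_PP finite_N] o_def E' F .
  have Ev: "E (bv (w, [])) = 0" if w: "w \<in> V" for w
    unfolding E_def sum_fun_apply map_scale_apply using w by (simp add: Dae_ev zero_fun_def)
  have zL: "z \<in> L" by (simp add: z_def)
  have adz: "ad z (bv (w, [])) = 0" if w: "w \<in> V" for w
  proof -
    have "(E + ad z) (bv (w, [])) = 0" using sum0 by simp
    then show ?thesis using Ev[OF w] by simp
  qed
  have zp: "z p = c (Inr p)" if p: "p \<in> N" for p
  proof -
    have "z p = (\<Sum>p'\<in>N. if p' = p then c (Inr p') else 0)"
      unfolding z_def sum_fun_apply using p by (intro sum.cong refl) (auto simp: bv_def N_def)
    then show ?thesis using p finite_N by simp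
  qed
  have cN: "c (Inr p) = 0" if p: "p \<in> N" for p
    using cent1[OF zL adz, of p] p zp[OF p] by (simp add: N_def)
  have "z = 0" unfolding z_def by (rule sum.neutral) (simp add: cN)
  then have E0: "E = 0" using sum0 by (simp add: ad_zero)
  have cPP: "c (Inl (b, e)) = 0" if be: "(b, e) \<in> PP" for b e
  proof -
    have b: "b \<in> A" "e \<in> P" using be by (auto simp: PP_iff)
    have "E (bv (s b, [b])) e = (\<Sum>ae\<in>PP. c (Inl ae) * Dae (fst ae) (snd ae) (bv (s b, [b])) e)"
      by (simp add: E_def sum_fun_apply map_scale_apply)
    also have "\<dots> = (\<Sum>ae\<in>PP. if ae = (b, e) then c (Inl ae) else 0)"
    proof (intro sum.cong refl)
      fix ae assume ae: "ae \<in> PP"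
      obtain a' e' where ae': "ae = (a', e')" by (cases ae)
      have "a' \<in> A" "e' \<in> P" "fst e' = s a'" "tg e' = t a'" using ae ae' by (auto simp: PP_iff)
      then have "Dae a' e' (bv (s b, [b])) = (if b = a' then bv e' else (0 :: ('v, 'a) path \<Rightarrow> 'k))"
        using b by (simp add: Dae_arr)
      then have DD: "Dae a' e' (bv (s b, [b])) e = (if b = a' \<and> e = e' then 1 else (0::'k))"
        using b \<open>e' \<in> P\<close> by (simp add: bv_apply)
      show "c (Inl ae) * Dae (fst ae) (snd ae) (bv (s b, [b])) e = (if ae = (b, e) then c (Inl ae) else 0)"
        using ae' DD by auto
    qed
    also have "\<dots> = c (Inl (b, e))" using be finite_PP by simp
    finally show ?thesis using E0 by simp
  qed
  show ?thesis
  proof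
    fix i assume "i \<in> PP <+> N"
    then show "c i = 0" using cN cPP by auto
  qed
qed


lemma ad_z0_ev:
  "ad (\<Sum>v\<in>V. sc (z (v, [])) (bv (v, []))) (bv (w, [])) = (0 :: ('v, 'a) path \<Rightarrow> 'k::field)"
proof -
  let ?z0 = "(\<Sum>v\<in>V. sc (z (v, [])) (bv (v, []))) :: ('v, 'a) path \<Rightarrow> 'k"
  have "mul ?z0 (bv (w, [])) = (\<Sum>v\<in>V. if v = w then sc (z (v, [])) (bv (v, [])) else 0)"
    by (simp add: mul_sum_left mul_sc_left mul_ev_left) (intro sum.cong refl, auto)
  moreover have "mul (bv (w, [])) ?z0 = (\<Sum>v\<in>V. if v = w then sc (z (v, [])) (bv (v, [])) else 0)"
    by (simp add: mul_sum_right mul_sc_right mul_ev_left) (intro sum.cong refl, auto)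
  ultimately show ?thesis by (simp add: ad_def)
qed

lemma Der_span:
  assumes D: "(D :: (('v, 'a) path \<Rightarrow> 'k::field) \<Rightarrow> _) \<in> Der"
  shows "D \<in> ms.span (gD ` (PP <+> N))"
proof -
  define z :: "('v, 'a) path \<Rightarrow> 'k" where "z = (\<Sum>v\<in>V. mul (D (bv (v, []))) (bv (v, [])))"
  have zL: "z \<in> L" by (simp add: z_def)
  define zN where "zN = (\<Sum>p\<in>N. sc (z p) (bv p))"
  define z0 where "z0 = (\<Sum>v\<in>V. sc (z (v, [])) (bv (v, [])))"
  have "z = (\<Sum>p\<in>P. sc (z p) (bv p))" by (rule L_expand[OF zL])
  also have "\<dots> = zN + z0" unfolding zN_def z0_def by (rule P_split)
  finally have zsplit: "zN = z - z0" by (simp add: algebra_simps)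
  have zNL: "zN \<in> L" by (simp add: zN_def)
  have adN: "ad zN (bv (w, [])) = D (bv (w, []))" if w: "w \<in> V" for w
    using ad_center[OF D w] ad_z0_ev[of z w] unfolding zsplit ad_diff z0_def z_def by simp
  define D1 where "D1 = D - ad zN"
  have D1: "D1 \<in> Der" unfolding D1_def using D ad_Der[OF zNL] by (rule Der_diff)
  have D1v: "D1 (bv (w, [])) = 0" if w: "w \<in> V" for w
    using adN[OF w] by (simp add: D1_def)
  define S where "S = (\<Sum>ae\<in>PP. map_scale (D1 (bv (s (fst ae), [fst ae])) (snd ae)) (Dae (fst ae) (snd ae)))"
  have SDer: "S \<in> Der" unfolding S_def
  proof (intro Der_sum Der_scale Dae_Der)
    fix ae assume "ae \<in> PP"
    then show "snd (snd ae) \<noteq> []" using PP_nonempty_path[of "fst ae" "snd ae"] by simp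
  qed
  have Sv: "S (bv (w, [])) = 0" if w: "w \<in> V" for w
    unfolding S_def sum_fun_apply map_scale_apply using w by (simp add: Dae_ev zero_fun_def)
  have Sa: "S (bv (s b, [b])) = D1 (bv (s b, [b]))" if b: "b \<in> A" for b
  proof (rule ext)
    fix r
    have "S (bv (s b, [b])) r = (\<Sum>ae\<in>PP. D1 (bv (s (fst ae), [fst ae])) (snd ae) * Dae (fst ae) (snd ae) (bv (s b, [b])) r)"
      by (simp add: S_def sum_fun_apply map_scale_apply)
    also have "\<dots> = (\<Sum>ae\<in>PP. if ae = (b, r) then D1 (bv (s b, [b])) r else 0)"
    proof (intro sum.cong refl)
      fix ae assume ae: "ae \<in> PP"
      obtain a' e' where ae': "ae = (a', e')" by (cases ae)
      have h: "a' \<in> A" "e' \<in> P" "fst e' = s a'" "tg e' = t a'" using ae ae' by (auto simp: PP_iff)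
      then have "Dae a' e' (bv (s b, [b])) = (if b = a' then bv e' else (0 :: ('v, 'a) path \<Rightarrow> 'k))"
        using b by (simp add: Dae_arr)
      then have DD: "Dae a' e' (bv (s b, [b])) r = (if b = a' \<and> r = e' then 1 else (0::'k))"
        using h by (simp add: bv_apply2)
      show "D1 (bv (s (fst ae), [fst ae])) (snd ae) * Dae (fst ae) (snd ae) (bv (s b, [b])) r =
            (if ae = (b, r) then D1 (bv (s b, [b])) r else 0)"
        using ae' DD by auto
    qed
    also have "\<dots> = (if (b, r) \<in> PP then D1 (bv (s b, [b])) r else 0)"
      using finite_PP by simp
    also have "\<dots> = D1 (bv (s b, [b])) r"
      using der_parallel[OF D1 D1v b, of r] by auto
    finally show "S (bv (s b, [b])) r = D1 (bv (s b, [b])) r" .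
  qed
  have "D1 - S = 0"
  proof (rule der_zero)
    show "D1 - S \<in> Der" using D1 SDer by (rule Der_diff)
  next
    fix v assume "v \<in> V" then show "(D1 - S) (bv (v, [])) = 0" by (simp add: D1v Sv)
  next
    fix b assume "b \<in> A" then show "(D1 - S) (bv (s b, [b])) = 0" by (simp add: Sa)
  qed
  then have Deq: "D = ad zN + S" by (simp add: D1_def algebra_simps)
  have "ad zN = (\<Sum>p\<in>N. map_scale (z p) (gD (Inr p)))"
    by (simp add: zN_def ad_sum ad_sc gD_def)
  also have "\<dots> \<in> ms.span (gD ` (PP <+> N))"
    by (intro ms.span_sum ms.span_scale ms.span_base) auto
  finally have s1: "ad zN \<in> ms.span (gD ` (PP <+> N))" .
  have "S = (\<Sum>ae\<in>PP. map_scale (D1 (bv (s (fst ae), [fst ae])) (snd ae)) (gD (Inl ae)))"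
    by (simp add: S_def gD_def)
  also have "\<dots> \<in> ms.span (gD ` (PP <+> N))"
    by (intro ms.span_sum ms.span_scale ms.span_base) auto
  finally have s2: "S \<in> ms.span (gD ` (PP <+> N))" .
  show ?thesis unfolding Deq using s1 s2 by (rule ms.span_add)
qed

lemma gD_Der: assumes i: "i \<in> PP <+> N" shows "(gD i :: (('v, 'a) path \<Rightarrow> 'k::field) \<Rightarrow> _) \<in> Der"
proof (cases i)
  case (Inl ae)
  then have "ae \<in> PP" using i by auto
  then have "snd (snd ae) \<noteq> []" using PP_nonempty_path[of "fst ae" "snd ae"] by simp
  then show ?thesis by (simp add: gD_def Inl Dae_Der)
next
  case (Inr p)
  then show ?thesis by (simp add: gD_def ad_Der)
qed

lemma dim_Der: "ms.dim (Der :: ((('v, 'a) path \<Rightarrow> 'k::field) \<Rightarrow> _) set) = card PP + card N"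
proof -
  have "ms.dim (Der :: ((('v, 'a) path \<Rightarrow> 'k::field) \<Rightarrow> _) set) = card (PP <+> N)"
  proof (rule ms.dim_family)
    show "finite (PP <+> N)" using finite_PP finite_N by simp
  next
    fix c assume "(\<Sum>i\<in>PP <+> N. map_scale (c i) (gD i :: (('v, 'a) path \<Rightarrow> 'k) \<Rightarrow> _)) = 0"
    then show "\<forall>i\<in>PP <+> N. c i = 0" by (rule gD_indep)
  next
    show "gD ` (PP <+> N) \<subseteq> (Der :: ((('v, 'a) path \<Rightarrow> 'k::field) \<Rightarrow> _) set)" using gD_Der by blast
  next
    show "(Der :: ((('v, 'a) path \<Rightarrow> 'k::field) \<Rightarrow> _) set) \<subseteq> ms.span (gD ` (PP <+> N))"
      using Der_span by blast
  qed
  then show ?thesis using finite_PP finite_N by (simp add: card_Plus)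
qed


definition gI :: "('v, 'a) path + 'v \<Rightarrow> ((('v, 'a) path \<Rightarrow> 'k::field) \<Rightarrow> (('v, 'a) path \<Rightarrow> 'k))" where
  "gI i = (case i of Inl p \<Rightarrow> ad (bv p) | Inr v \<Rightarrow> ad (bv (v, [])))"

lemma gI_indep:
  assumes v0: "v0 \<in> V"
    and h: "(\<Sum>i\<in>N <+> (V - {v0}). map_scale (c i) (gI i)) = (0 :: (('v, 'a) path \<Rightarrow> 'k::field) \<Rightarrow> _)"
  shows "\<forall>i\<in>N <+> (V - {v0}). c i = 0"
proof -
  define w :: "('v, 'a) path \<Rightarrow> 'k" where
    "w = (\<Sum>p\<in>N. sc (c (Inl p)) (bv p)) + (\<Sum>v\<in>V - {v0}. sc (c (Inr v)) (bv (v, [])))"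
  have wL: "w \<in> L" by (simp add: w_def)
  have "(\<Sum>i\<in>N <+> (V - {v0}). map_scale (c i) (gI i :: (('v, 'a) path \<Rightarrow> 'k) \<Rightarrow> _)) = ad w"
    using finite_N finV by (simp add: sum.Plus gI_def w_def ad_add ad_sum ad_sc)
  with h have adw: "ad w = 0" by simp
  have wN: "w p = c (Inl p)" if p: "p \<in> N" for p
  proof -
    have "(\<Sum>p'\<in>N. sc (c (Inl p')) (bv p')) p = (\<Sum>p'\<in>N. if p' = p then c (Inl p') else 0)"
      unfolding sum_fun_apply using p by (intro sum.cong refl) (auto simp: bv_def N_def)
    moreover have "(\<Sum>v\<in>V - {v0}. sc (c (Inr v)) (bv (v, []))) p = (0::'k)"
      unfolding sum_fun_apply using p by (intro sum.neutral) (auto simp: bv_def N_def path_len_def)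
    ultimately show ?thesis using p finite_N by (simp add: w_def)
  qed
  have wV: "w (u, []) = (if u = v0 then 0 else c (Inr u))" if u: "u \<in> V" for u
  proof -
    have "(\<Sum>p'\<in>N. sc (c (Inl p')) (bv p')) (u, []) = (0::'k)"
      unfolding sum_fun_apply by (intro sum.neutral) (auto simp: bv_def N_def path_len_def)
    moreover have "(\<Sum>v\<in>V - {v0}. sc (c (Inr v)) (bv (v, []))) (u, []) =
        (\<Sum>v\<in>V - {v0}. if v = u then c (Inr v) else 0)"
      unfolding sum_fun_apply using u by (intro sum.cong refl) (auto simp: bv_def ev_P)
    ultimately show ?thesis using u finV by (simp add: w_def)
  qed
  have cN: "c (Inl p) = 0" if p: "p \<in> N" for p
    using cent1[OF wL, of p] adw p wN[OF p] by (simp add: N_def)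
  have cV: "c (Inr u) = 0" if u: "u \<in> V - {v0}" for u
    using cent2[OF wL adw, of u v0] u v0 wV[of u] wV[of v0] by simp
  show ?thesis
  proof
    fix i assume "i \<in> N <+> (V - {v0})"
    then show "c i = 0" using cN cV by auto
  qed
qed

lemma Inn_span:
  assumes v0: "v0 \<in> V" and z: "(z :: ('v, 'a) path \<Rightarrow> 'k::field) \<in> L"
  shows "ad z \<in> ms.span (gI ` (N <+> (V - {v0})))"
proof -
  let ?S = "ms.span (gI ` (N <+> (V - {v0})) :: ((('v, 'a) path \<Rightarrow> 'k) \<Rightarrow> _) set)"
  have ev: "ad (bv (v, [])) \<in> ?S" if v: "v \<in> V" for v
  proof (cases "v = v0")
    case False
    then have "ad (bv (v, [])) = gI (Inr v)" by (simp add: gI_def)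
    then show ?thesis using v False by (auto intro: ms.span_base)
  next
    case True
    have e1: "(one :: ('v, 'a) path \<Rightarrow> 'k) = bv (v0, []) + (\<Sum>u\<in>V - {v0}. bv (u, []))"
      unfolding one_def using finV v0 by (rule sum.remove)
    have a1: "ad (one :: ('v, 'a) path \<Rightarrow> 'k) = 0" by (rule ad_one)
    have "(0 :: (('v, 'a) path \<Rightarrow> 'k) \<Rightarrow> _) = ad (bv (v0, [])) + (\<Sum>u\<in>V - {v0}. ad (bv (u, [])))"
      using arg_cong[OF e1, of ad] a1 by (simp add: ad_add ad_sum)
    then have "ad (bv (v0, []) :: ('v, 'a) path \<Rightarrow> 'k) = - (\<Sum>u\<in>V - {v0}. gI (Inr u))"
      by (simp add: gI_def eq_neg_iff_add_eq_0)
    also have "\<dots> \<in> ?S"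
      by (intro ms.span_neg ms.span_sum ms.span_base) auto
    finally show ?thesis using True by simp
  qed
  have "z = (\<Sum>p\<in>P. sc (z p) (bv p))" by (rule L_expand[OF z])
  also have "\<dots> = (\<Sum>p\<in>N. sc (z p) (bv p)) + (\<Sum>v\<in>V. sc (z (v, [])) (bv (v, [])))" by (rule P_split)
  finally have zz: "z = (\<Sum>p\<in>N. sc (z p) (bv p)) + (\<Sum>v\<in>V. sc (z (v, [])) (bv (v, [])))" .
  have "ad z = ad ((\<Sum>p\<in>N. sc (z p) (bv p)) + (\<Sum>v\<in>V. sc (z (v, [])) (bv (v, []))))"
    using arg_cong[OF zz, of ad] .
  also have "\<dots> = (\<Sum>p\<in>N. map_scale (z p) (gI (Inl p))) + (\<Sum>v\<in>V. map_scale (z (v, [])) (ad (bv (v, []))))"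
    by (simp add: ad_add ad_sum ad_sc gI_def)
  also have "\<dots> \<in> ?S"
    by (intro ms.span_add ms.span_sum ms.span_scale ev) (auto intro: ms.span_base)
  finally show ?thesis .
qed

lemma dim_Inn:
  assumes v0: "v0 \<in> V"
  shows "ms.dim (inner_derivations V A s t m :: ((('v, 'a) path \<Rightarrow> 'k::field) \<Rightarrow> _) set) = card N + (card V - 1)"
proof -
  have "ms.dim (ad ` L :: ((('v, 'a) path \<Rightarrow> 'k::field) \<Rightarrow> _) set) = card (N <+> (V - {v0}))"
  proof (rule ms.dim_family)
    show "finite (N <+> (V - {v0}))" using finite_N finV by simp
  next
    fix c assume "(\<Sum>i\<in>N <+> (V - {v0}). map_scale (c i) (gI i :: (('v, 'a) path \<Rightarrow> 'k) \<Rightarrow> _)) = 0"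
    then show "\<forall>i\<in>N <+> (V - {v0}). c i = 0" by (rule gI_indep[OF v0])
  next
    show "gI ` (N <+> (V - {v0})) \<subseteq> (ad ` L :: ((('v, 'a) path \<Rightarrow> 'k::field) \<Rightarrow> _) set)"
      by (auto simp: gI_def)
  next
    show "(ad ` L :: ((('v, 'a) path \<Rightarrow> 'k::field) \<Rightarrow> _) set) \<subseteq> ms.span (gI ` (N <+> (V - {v0})))"
      using Inn_span[OF v0] by blast
  qed
  then show ?thesis using finite_N finV v0 by (simp add: card_Plus Inn_eq)
qed

lemma HH1_formula:
  "HH1_dim V A s t m TYPE('k::field) = 1 - int (card V) + int (card PP)"
proof -
  obtain v0 where v0: "v0 \<in> V" using conn by (auto simp: connected_quiver_def)
  have "0 < card V" using v0 finV card_gt_0_iff by blast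
  then have cV: "1 \<le> card V" by simp
  show ?thesis
    unfolding HH1_dim_def kdim_eq
    using dim_Der[where 'k = 'k] dim_Inn[OF v0, where 'k = 'k] cV by simp
qed

end

theorem theorem6p1:
  fixes V :: "'v set" and A :: "'a set" and s t :: "'a \<Rightarrow> 'v" and m :: nat
  assumes "is_quiver V A s t"
    and "finite_quiver V A"
    and "connected_quiver V A s t"
    and "acyclic_quiver V A s t"
    and "m \<ge> 2"
  shows "HH1_dim V A s t m TYPE('k::field) =
           1 - int (card V) + int (card (parallel_pairs V A s t m))"
proof -
  interpret tq V A s t m
    using assms by unfold_locales (auto simp: finite_quiver_def)
  show ?thesis by (rule HH1_formula)
qed

end
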